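(* Assume the setting in the context, with a decomposition of $\mathcal X$ over $A$ and a cost function $g\in\mathcal G_s$. If $$\mathcal R(B)=\bigoplus_{i\in\mathcal I}\big[\mathcal R(B)\cap\mathcal X_i\big],$$ then $\{(A,B|_{\mathcal E_i},g,T)\}_{i\in\mathcal I}$ is a decomposition of $(A,B,g,T)$ for every integer $T>0$, and $\{(A,B|_{\mathcal E_i},g,\alpha)\}_{i\in\mathcal I}$ is a decomposition of $(A,B,g,\alpha)$ for every $\alpha\in(0,1)$.
   Context: Let $\mathcal F$ be a field and $\mathcal X,\mathcal U$ finite-dimensional vector spaces over $\mathcal F$. Let $A:\mathcal X\to\mathcal X$ and $B:\mathcal U\to\mathcal X$ be linear maps with $B$ injective; $\mathcal R(B)$ is the range of $B$. Consider the system $x_{t+1}=Ax_t+Bu_t$ and a cost $g:\mathcal X\to\mathbb R_{\ge 0}$ with $g(x)=0\iff x=0$. Standing assumption: all minima appearing below are attained. Finite-horizon problem $(A,B,g,T)$ ($T>0$ integer): policies $\pi(x_0)=(\pi_t(x_0))_{t=0}^{T-1}\in\mathcal U^T$, cost $J(x_0,\pi)=\sum_{t=0}^T g(x_t)$ with $x_{t+1}=Ax_t+B\pi_t(x_0)$. Infinite-horizon problem $(A,B,g,\alpha)$ ($\alpha\in(0,1)$): policies $\pi(x_0)\in\mathcal U^{\mathbb Z_+}$, cost $J(x_0,\pi)=\sum_{t\ge0}\alpha^tg(x_t)$. In both, $J^*(x_0)=\min_\pi J(x_0,\pi)$ and a minimizing policy is optimal at $x_0$. A decomposition of $\mathcal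 X$ over $A$ is a direct sum $\mathcal X=\mathcal X_1\oplus\cdots\oplus\mathcal X_r$ with $r>1$ and $A\mathcal X_i\subseteq\mathcal X_i$, $i\in\mathcal I=\{1,\dots,r\}$; $\rho_i:\mathcal X\to\mathcal X_i$ is the projection along the other summands. $\mathcal G_s$ is the set of $h:\mathcal X\to\mathbb R_{\ge0}$ with $h(x)=\sum_i h(\rho_i(x))$ for all $x$. $\mathcal E_i=\{u\in\mathcal U:Bu\in\mathcal X_i\}$. Subproblems $(A,B|_{\mathcal E_i},g,T)$ and $(A,B|_{\mathcal E_i},g,\alpha)$: the same problems for the system $x_{i,t+1}=Ax_{i,t}+B\bar u_{i,t}$ with states in $\mathcal X_i$ and inputs in $\mathcal E_i$; optimal costs $\bar J_i^*$, optimal policies $\bar\pi_i^*$. Definition 1: the family of subproblems is a decomposition of the original problem if for every $x\in\mathcal X$: $J^*(x)=\sum_i\bar J_i^*(\rho_i(x))$, and for every choice of optimal policies $\bar\pi_i^*(\rho_i(x))$ there exists an optimal policy $\pi^*(x)$ of the original problem with $\pi^*(x)=\sum_i\bar\pi_i^*(\rho_i(x))$ (componentwise sum). *)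

theory Defs
  imports Complex_Main "HOL-Library.Extended_Nonnegative_Real"
begin

definition fin_dim_vs :: "('f::field \<Rightarrow> 'v::ab_group_add \<Rightarrow> 'v) \<Rightarrow> bool" where
  "fin_dim_vs s \<longleftrightarrow> (\<exists>Bs. finite_dimensional_vector_space s Bs)"

definition direct_sum_of ::
  "('f::field \<Rightarrow> 'v::ab_group_add \<Rightarrow> 'v) \<Rightarrow> 'v set \<Rightarrow> nat set \<Rightarrow> (nat \<Rightarrow> 'v set) \<Rightarrow> bool" where
  "direct_sum_of s V I W \<longleftrightarrow>
     (\<forall>i\<in>I. module.subspace s (W i) \<and> W i \<subseteq> V) \<and>
     (\<forall>v\<in>V. \<exists>!w. (\<forall>i. (i \<in> I \<longrightarrow> w i \<in> W i) \<and> (i \<notin> I \<longrightarrow> w i = 0)) \<and> v = sum w I)"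

definition proj :: "nat set \<Rightarrow> (nat \<Rightarrow> 'v::ab_group_add set) \<Rightarrow> nat \<Rightarrow> 'v \<Rightarrow> 'v" where
  "proj I X i x = (THE w. (\<forall>j. (j \<in> I \<longrightarrow> w j \<in> X j) \<and> (j \<notin> I \<longrightarrow> w j = 0)) \<and> x = sum w I) i"

fun traj :: "('x::ab_group_add \<Rightarrow> 'x) \<Rightarrow> ('u \<Rightarrow> 'x) \<Rightarrow> 'x \<Rightarrow> (nat \<Rightarrow> 'u) \<Rightarrow> nat \<Rightarrow> 'x" where
  "traj A B x0 u 0 = x0"
| "traj A B x0 u (Suc t) = A (traj A B x0 u t) + B (u t)"

(* ---- finite horizon T; a policy value at x0 is an element of E^T,
        represented as a sequence that vanishes from time T on ---- *)
definition fin_adm :: "'u::zero set \<Rightarrow> nat \<Rightarrow> (nat \<Rightarrow> 'u) \<Rightarrow> bool" where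
  "fin_adm E T u \<longleftrightarrow> (\<forall>t<T. u t \<in> E) \<and> (\<forall>t\<ge>T. u t = 0)"

definition Jfin :: "('x::ab_group_add \<Rightarrow> 'x) \<Rightarrow> ('u \<Rightarrow> 'x) \<Rightarrow> ('x \<Rightarrow> real) \<Rightarrow> nat \<Rightarrow> 'x \<Rightarrow> (nat \<Rightarrow> 'u) \<Rightarrow> real" where
  "Jfin A B g T x0 u = (\<Sum>t\<le>T. g (traj A B x0 u t))"

definition Jfin_star :: "('x::ab_group_add \<Rightarrow> 'x) \<Rightarrow> ('u::zero \<Rightarrow> 'x) \<Rightarrow> 'u set \<Rightarrow> ('x \<Rightarrow> real) \<Rightarrow> nat \<Rightarrow> 'x \<Rightarrow> real" where
  "Jfin_star A B E g T x0 = Inf {Jfin A B g T x0 u | u. fin_adm E T u}"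

definition fin_opt :: "('x::ab_group_add \<Rightarrow> 'x) \<Rightarrow> ('u::zero \<Rightarrow> 'x) \<Rightarrow> 'u set \<Rightarrow> ('x \<Rightarrow> real) \<Rightarrow> nat \<Rightarrow> 'x \<Rightarrow> (nat \<Rightarrow> 'u) \<Rightarrow> bool" where
  "fin_opt A B E g T x0 u \<longleftrightarrow> fin_adm E T u \<and> (\<forall>v. fin_adm E T v \<longrightarrow> Jfin A B g T x0 u \<le> Jfin A B g T x0 v)"

definition inf_adm :: "'u set \<Rightarrow> (nat \<Rightarrow> 'u) \<Rightarrow> bool" where
  "inf_adm E u \<longleftrightarrow> (\<forall>t. u t \<in> E)"

definition Jinf :: "('x::ab_group_add \<Rightarrow> 'x) \<Rightarrow> ('u \<Rightarrow> 'x) \<Rightarrow> ('x \<Rightarrow> real) \<Rightarrow> real \<Rightarrow> 'x \<Rightarrow> (nat \<Rightarrow> 'u) \<Rightarrow> ennreal" where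
  "Jinf A B g \<alpha> x0 u = (\<Sum>t. ennreal (\<alpha> ^ t * g (traj A B x0 u t)))"

definition Jinf_star :: "('x::ab_group_add \<Rightarrow> 'x) \<Rightarrow> ('u \<Rightarrow> 'x) \<Rightarrow> 'u set \<Rightarrow> ('x \<Rightarrow> real) \<Rightarrow> real \<Rightarrow> 'x \<Rightarrow> ennreal" where
  "Jinf_star A B E g \<alpha> x0 = Inf {Jinf A B g \<alpha> x0 u | u. inf_adm E u}"

definition inf_opt :: "('x::ab_group_add \<Rightarrow> 'x) \<Rightarrow> ('u \<Rightarrow> 'x) \<Rightarrow> 'u set \<Rightarrow> ('x \<Rightarrow> real) \<Rightarrow> real \<Rightarrow> 'x \<Rightarrow> (nat \<Rightarrow> 'u) \<Rightarrow> bool" where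
  "inf_opt A B E g \<alpha> x0 u \<longleftrightarrow> inf_adm E u \<and> (\<forall>v. inf_adm E v \<longrightarrow> Jinf A B g \<alpha> x0 u \<le> Jinf A B g \<alpha> x0 v)"

end

theory Submission
  imports Defs
begin


locale dsetup =
  fixes A :: "'x::ab_group_add \<Rightarrow> 'x" and B :: "'u::ab_group_add \<Rightarrow> 'x" and g :: "'x \<Rightarrow> real"
    and I :: "nat set" and X :: "nat \<Rightarrow> 'x set"
  assumes finI: "finite I"
    and uniq: "\<And>v. \<exists>!w. (\<forall>i. (i \<in> I \<longrightarrow> w i \<in> X i) \<and> (i \<notin> I \<longrightarrow> w i = 0)) \<and> v = sum w I"
    and X0: "\<And>i. i \<in> I \<Longrightarrow> 0 \<in> X i"
    and Xadd: "\<And>i a b. i \<in> I \<Longrightarrow> a \<in> X i \<Longrightarrow> b \<in> X i \<Longrightarrow> a + b \<in> X i"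
    and Aadd: "\<And>a b. A (a + b) = A a + A b"
    and Badd: "\<And>a b. B (a + b) = B a + B b"
    and injB: "inj B"
    and invar: "\<And>i a. i \<in> I \<Longrightarrow> a \<in> X i \<Longrightarrow> A a \<in> X i"
    and rsplit: "\<And>i u. i \<in> I \<Longrightarrow> proj I X i (B u) \<in> range B"
    and g_sep: "\<And>x. g x = (\<Sum>i\<in>I. g (proj I X i x))"
    and g_nonneg: "\<And>x. g x \<ge> 0"
begin

definition P where "P i x = proj I X i x"

lemma A0: "A 0 = 0" using Aadd[of 0 0] by simp
lemma B0: "B 0 = 0" using Badd[of 0 0] by simp

lemma Asum: "A (sum f S) = (\<Sum>i\<in>S. A (f i))"
  by (induction S rule: infinite_finite_induct) (auto simp: A0 Aadd)
lemma Bsum: "B (sum f S) = (\<Sum>i\<in>S. B (f i))"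
  by (induction S rule: infinite_finite_induct) (auto simp: B0 Badd)

lemma proj_prop: "(\<forall>i. (i \<in> I \<longrightarrow> P i x \<in> X i) \<and> (i \<notin> I \<longrightarrow> P i x = 0)) \<and> x = (\<Sum>i\<in>I. P i x)"
proof -
  have "(\<lambda>i. P i x) = (THE w. (\<forall>j. (j \<in> I \<longrightarrow> w j \<in> X j) \<and> (j \<notin> I \<longrightarrow> w j = 0)) \<and> x = sum w I)"
    unfolding P_def proj_def by simp
  moreover have "(\<lambda>w. (\<forall>j. (j \<in> I \<longrightarrow> w j \<in> X j) \<and> (j \<notin> I \<longrightarrow> w j = 0)) \<and> x = sum w I)
     (THE w. (\<forall>j. (j \<in> I \<longrightarrow> w j \<in> X j) \<and> (j \<notin> I \<longrightarrow> w j = 0)) \<and> x = sum w I)"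
    by (rule theI'[OF uniq])
  ultimately show ?thesis by (metis (no_types, lifting))
qed

lemma PX: "i \<in> I \<Longrightarrow> P i x \<in> X i" using proj_prop by blast
lemma Psum: "x = (\<Sum>i\<in>I. P i x)" using proj_prop by blast

lemma P_unique:
  assumes "\<forall>i. (i \<in> I \<longrightarrow> w i \<in> X i) \<and> (i \<notin> I \<longrightarrow> w i = 0)" "x = sum w I"
  shows "P i x = w i"
proof -
  have "(THE w. (\<forall>j. (j \<in> I \<longrightarrow> w j \<in> X j) \<and> (j \<notin> I \<longrightarrow> w j = 0)) \<and> x = sum w I) = w"
    by (rule the1_equality[OF uniq]) (rule conjI, fact assms(1), fact assms(2))
  then show ?thesis unfolding P_def proj_def by simp
qed

lemma P_sum_in:
  assumes "\<And>i. i \<in> I \<Longrightarrow> w i \<in> X i" "i \<in> I"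
  shows "P i (sum w I) = w i"
proof -
  let ?w = "\<lambda>i. if i \<in> I then w i else 0"
  have "P i (sum ?w I) = ?w i" by (rule P_unique) (use assms in auto)
  moreover have "sum ?w I = sum w I" by (rule sum.cong) auto
  ultimately show ?thesis using assms by simp
qed

definition dec where "dec i u = inv B (P i (B u))"

lemma B_dec: "i \<in> I \<Longrightarrow> B (dec i u) = P i (B u)"
  unfolding dec_def using rsplit[of i u] by (simp add: P_def f_inv_into_f)

lemma dec_E: "i \<in> I \<Longrightarrow> B (dec i u) \<in> X i" using B_dec PX by simp

lemma dec_sum: "(\<Sum>i\<in>I. dec i u) = u"
proof -
  have "B (\<Sum>i\<in>I. dec i u) = (\<Sum>i\<in>I. P i (B u))" by (simp add: Bsum B_dec)
  also have "\<dots> = B u" using Psum[of "B u"] by simp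
  finally show ?thesis using injB by (simp add: inj_eq)
qed

lemma P0: "i \<in> I \<Longrightarrow> P i 0 = 0"
  using P_sum_in[of "\<lambda>_. 0" i] X0 by simp

lemma dec0: "i \<in> I \<Longrightarrow> dec i 0 = 0"
  using B_dec[of i 0] P0 B0 injB by (metis injD)

lemma traj_sum:
  assumes "\<And>i t. i \<in> I \<Longrightarrow> B (us i t) \<in> X i" "\<And>i. i \<in> I \<Longrightarrow> xs i \<in> X i"
  shows "(\<forall>i\<in>I. traj A B (xs i) (us i) t \<in> X i) \<and>
     traj A B (sum xs I) (\<lambda>t. \<Sum>i\<in>I. us i t) t = (\<Sum>i\<in>I. traj A B (xs i) (us i) t)"
proof (induction t)
  case 0 then show ?case using assms by simp
next
  case (Suc t)
  then show ?case using assms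
    by (auto simp: Asum Bsum sum.distrib intro!: Xadd invar)
qed

lemma g_traj:
  assumes "\<And>i t. i \<in> I \<Longrightarrow> B (us i t) \<in> X i"
  shows "g (traj A B x (\<lambda>t. \<Sum>i\<in>I. us i t) t) = (\<Sum>i\<in>I. g (traj A B (P i x) (us i) t))"
proof -
  have ts: "(\<forall>i\<in>I. traj A B (P i x) (us i) t \<in> X i) \<and>
     traj A B (\<Sum>i\<in>I. P i x) (\<lambda>t. \<Sum>i\<in>I. us i t) t = (\<Sum>i\<in>I. traj A B (P i x) (us i) t)"
    by (rule traj_sum) (use assms PX in auto)
  have "traj A B x (\<lambda>t. \<Sum>i\<in>I. us i t) t = (\<Sum>i\<in>I. traj A B (P i x) (us i) t)"
    using ts Psum[of x] by simp
  then have "g (traj A B x (\<lambda>t. \<Sum>i\<in>I. us i t) t) = (\<Sum>i\<in>I. g (P i (\<Sum>j\<in>I. traj A B (P j x) (us j) t)))"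
    by (subst g_sep) (simp add: P_def)
  also have "\<dots> = (\<Sum>i\<in>I. g (traj A B (P i x) (us i) t))"
    by (rule sum.cong) (use ts P_sum_in in auto)
  finally show ?thesis .
qed

lemma u_dec: "u = (\<lambda>t. \<Sum>i\<in>I. dec i (u t))" using dec_sum by simp

lemma Jfin_split:
  assumes "\<And>i t. i \<in> I \<Longrightarrow> B (us i t) \<in> X i"
  shows "Jfin A B g T x (\<lambda>t. \<Sum>i\<in>I. us i t) = (\<Sum>i\<in>I. Jfin A B g T (P i x) (us i))"
  unfolding Jfin_def using g_traj[OF assms] by (simp add: sum.swap[of _ I])

lemma Jinf_split:
  assumes "\<And>i t. i \<in> I \<Longrightarrow> B (us i t) \<in> X i" "\<alpha> > 0"
  shows "Jinf A B g \<alpha> x (\<lambda>t. \<Sum>i\<in>I. us i t) = (\<Sum>i\<in>I. Jinf A B g \<alpha> (P i x) (us i))"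
proof -
  have pt: "ennreal (\<alpha> ^ t * g (traj A B x (\<lambda>t. \<Sum>i\<in>I. us i t) t)) =
     (\<Sum>i\<in>I. ennreal (\<alpha> ^ t * g (traj A B (P i x) (us i) t)))" for t
  proof -
    have "ennreal (\<alpha> ^ t * g (traj A B x (\<lambda>t. \<Sum>i\<in>I. us i t) t)) =
       ennreal (\<Sum>i\<in>I. \<alpha> ^ t * g (traj A B (P i x) (us i) t))"
      by (simp add: g_traj[OF assms(1)] sum_distrib_left)
    also have "\<dots> = (\<Sum>i\<in>I. ennreal (\<alpha> ^ t * g (traj A B (P i x) (us i) t)))"
      by (rule sum_ennreal[symmetric]) (use assms(2) g_nonneg in auto)
    finally show ?thesis .
  qed
  have "Jinf A B g \<alpha> x (\<lambda>t. \<Sum>i\<in>I. us i t) = (\<Sum>t. \<Sum>i\<in>I. ennreal (\<alpha> ^ t * g (traj A B (P i x) (us i) t)))"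
    unfolding Jinf_def pt ..
  also have "\<dots> = (\<Sum>i\<in>I. Jinf A B g \<alpha> (P i x) (us i))"
    unfolding Jinf_def by (rule suminf_sum) auto
  finally show ?thesis .
qed

lemma fin_main:
  assumes opt: "\<forall>i\<in>I. fin_opt A B {u. B u \<in> X i} g T (P i x) (us i)"
  shows "fin_opt A B UNIV g T x (\<lambda>t. \<Sum>i\<in>I. us i t) \<and>
    Jfin_star A B UNIV g T x = (\<Sum>i\<in>I. Jfin_star A B {u. B u \<in> X i} g T (P i x))"
proof -
  have admi: "fin_adm {u. B u \<in> X i} T (us i)" if "i \<in> I" for i
    using bspec[OF opt that] unfolding fin_opt_def by (rule conjunct1)
  have mini: "Jfin A B g T (P i x) (us i) \<le> Jfin A B g T (P i x) v"
    if "i \<in> I" "fin_adm {u. B u \<in> X i} T v" for i v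
    using bspec[OF opt that(1)] that(2) unfolding fin_opt_def by blast
  have usX: "B (us i t) \<in> X i" if i: "i \<in> I" for i t
  proof (cases "t < T")
    case True then show ?thesis using admi[OF i] unfolding fin_adm_def by simp
  next
    case False then have "us i t = 0" using admi[OF i] unfolding fin_adm_def by simp
    then show ?thesis using B0 X0 i by simp
  qed
  have star_i: "Jfin_star A B {u. B u \<in> X i} g T (P i x) = Jfin A B g T (P i x) (us i)" if i: "i \<in> I" for i
    unfolding Jfin_star_def
  proof (rule cInf_eq_minimum)
    show "Jfin A B g T (P i x) (us i) \<in> {Jfin A B g T (P i x) u |u. fin_adm {u. B u \<in> X i} T u}"
      using admi[OF i] by blast
    fix y assume "y \<in> {Jfin A B g T (P i x) u |u. fin_adm {u. B u \<in> X i} T u}"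
    then obtain v where "y = Jfin A B g T (P i x) v" "fin_adm {u. B u \<in> X i} T v" by blast
    then show "Jfin A B g T (P i x) (us i) \<le> y" using mini[OF i] by simp
  qed
  have adm: "fin_adm UNIV T (\<lambda>t. \<Sum>i\<in>I. us i t)"
    unfolding fin_adm_def
  proof (intro conjI allI impI)
    fix t :: nat assume "T \<le> t"
    then show "(\<Sum>i\<in>I. us i t) = 0" using admi unfolding fin_adm_def by simp
  qed simp
  have le: "Jfin A B g T x (\<lambda>t. \<Sum>i\<in>I. us i t) \<le> Jfin A B g T x v" if v: "fin_adm UNIV T v" for v
  proof -
    let ?vs = "\<lambda>i t. dec i (v t)"
    have vsadm: "fin_adm {u. B u \<in> X i} T (?vs i)" if i: "i \<in> I" for i
      unfolding fin_adm_def
    proof (intro conjI allI impI)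
      fix t :: nat assume "T \<le> t"
      then have "v t = 0" using v unfolding fin_adm_def by simp
      then show "dec i (v t) = 0" using dec0[OF i] by simp
    qed (use dec_E[OF i] in simp)
    have "Jfin A B g T x v = Jfin A B g T x (\<lambda>t. \<Sum>i\<in>I. ?vs i t)" by (rule arg_cong[OF u_dec])
    also have "\<dots> = (\<Sum>i\<in>I. Jfin A B g T (P i x) (?vs i))" by (rule Jfin_split) (rule dec_E)
    also have "\<dots> \<ge> (\<Sum>i\<in>I. Jfin A B g T (P i x) (us i))"
      by (rule sum_mono) (rule mini, assumption, rule vsadm)
    finally show ?thesis using Jfin_split[of us T x, OF usX] by simp
  qed
  have opt0: "fin_opt A B UNIV g T x (\<lambda>t. \<Sum>i\<in>I. us i t)"
    using adm le unfolding fin_opt_def by blast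
  have "Jfin_star A B UNIV g T x = Jfin A B g T x (\<lambda>t. \<Sum>i\<in>I. us i t)"
    unfolding Jfin_star_def
  proof (rule cInf_eq_minimum)
    show "Jfin A B g T x (\<lambda>t. \<Sum>i\<in>I. us i t) \<in> {Jfin A B g T x u |u. fin_adm UNIV T u}"
      using adm by blast
    fix y assume "y \<in> {Jfin A B g T x u |u. fin_adm UNIV T u}"
    then obtain v where "y = Jfin A B g T x v" "fin_adm UNIV T v" by blast
    then show "Jfin A B g T x (\<lambda>t. \<Sum>i\<in>I. us i t) \<le> y" using le by simp
  qed
  also have "\<dots> = (\<Sum>i\<in>I. Jfin_star A B {u. B u \<in> X i} g T (P i x))"
    using Jfin_split[of us T x, OF usX] star_i by simp
  finally show ?thesis using opt0 by simp
qed

lemma inf_main: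
  assumes opt: "\<forall>i\<in>I. inf_opt A B {u. B u \<in> X i} g \<alpha> (P i x) (us i)" and a: "\<alpha> > 0"
  shows "inf_opt A B UNIV g \<alpha> x (\<lambda>t. \<Sum>i\<in>I. us i t) \<and>
    Jinf_star A B UNIV g \<alpha> x = (\<Sum>i\<in>I. Jinf_star A B {u. B u \<in> X i} g \<alpha> (P i x))"
proof -
  have admi: "inf_adm {u. B u \<in> X i} (us i)" if "i \<in> I" for i
    using bspec[OF opt that] unfolding inf_opt_def by (rule conjunct1)
  have mini: "Jinf A B g \<alpha> (P i x) (us i) \<le> Jinf A B g \<alpha> (P i x) v"
    if "i \<in> I" "inf_adm {u. B u \<in> X i} v" for i v
    using bspec[OF opt that(1)] that(2) unfolding inf_opt_def by blast
  have usX: "B (us i t) \<in> X i" if i: "i \<in> I" for i t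
    using admi[OF i] unfolding inf_adm_def by simp
  have star_i: "Jinf_star A B {u. B u \<in> X i} g \<alpha> (P i x) = Jinf A B g \<alpha> (P i x) (us i)" if i: "i \<in> I" for i
    unfolding Jinf_star_def
  proof (rule antisym)
    show "Inf {Jinf A B g \<alpha> (P i x) u |u. inf_adm {u. B u \<in> X i} u} \<le> Jinf A B g \<alpha> (P i x) (us i)"
      by (rule Inf_lower) (use admi[OF i] in blast)
    show "Jinf A B g \<alpha> (P i x) (us i) \<le> Inf {Jinf A B g \<alpha> (P i x) u |u. inf_adm {u. B u \<in> X i} u}"
    proof (rule Inf_greatest)
      fix y assume "y \<in> {Jinf A B g \<alpha> (P i x) u |u. inf_adm {u. B u \<in> X i} u}"
      then obtain v where "y = Jinf A B g \<alpha> (P i x) v" "inf_adm {u. B u \<in> X i} v" by blast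
      then show "Jinf A B g \<alpha> (P i x) (us i) \<le> y" using mini[OF i] by simp
    qed
  qed
  have adm: "inf_adm UNIV (\<lambda>t. \<Sum>i\<in>I. us i t)"
    unfolding inf_adm_def by simp
  have le: "Jinf A B g \<alpha> x (\<lambda>t. \<Sum>i\<in>I. us i t) \<le> Jinf A B g \<alpha> x v" for v
  proof -
    let ?vs = "\<lambda>i t. dec i (v t)"
    have vsadm: "inf_adm {u. B u \<in> X i} (?vs i)" if i: "i \<in> I" for i
      unfolding inf_adm_def using dec_E[OF i] by simp
    have "Jinf A B g \<alpha> x v = Jinf A B g \<alpha> x (\<lambda>t. \<Sum>i\<in>I. ?vs i t)" by (rule arg_cong[OF u_dec])
    also have "\<dots> = (\<Sum>i\<in>I. Jinf A B g \<alpha> (P i x) (?vs i))" by (rule Jinf_split) (rule dec_E, assumption, rule a)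
    also have "\<dots> \<ge> (\<Sum>i\<in>I. Jinf A B g \<alpha> (P i x) (us i))"
      by (rule sum_mono) (rule mini, assumption, rule vsadm)
    finally show ?thesis using Jinf_split[of us \<alpha> x, OF usX a] by simp
  qed
  have opt0: "inf_opt A B UNIV g \<alpha> x (\<lambda>t. \<Sum>i\<in>I. us i t)"
    using adm le unfolding inf_opt_def by blast
  have "Jinf_star A B UNIV g \<alpha> x = Jinf A B g \<alpha> x (\<lambda>t. \<Sum>i\<in>I. us i t)"
    unfolding Jinf_star_def
  proof (rule antisym)
    show "Inf {Jinf A B g \<alpha> x u |u. inf_adm UNIV u} \<le> Jinf A B g \<alpha> x (\<lambda>t. \<Sum>i\<in>I. us i t)"
      by (rule Inf_lower) (use adm in blast)
    show "Jinf A B g \<alpha> x (\<lambda>t. \<Sum>i\<in>I. us i t) \<le> Inf {Jinf A B g \<alpha> x u |u. inf_adm UNIV u}"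
      by (rule Inf_greatest) (use le in blast)
  qed
  also have "\<dots> = (\<Sum>i\<in>I. Jinf_star A B {u. B u \<in> X i} g \<alpha> (P i x))"
    using Jinf_split[of us \<alpha> x, OF usX a] star_i by simp
  finally show ?thesis using opt0 by simp
qed

end

theorem theorem1:
  fixes sX :: "'f::field \<Rightarrow> 'x::ab_group_add \<Rightarrow> 'x"
    and sU :: "'f \<Rightarrow> 'u::ab_group_add \<Rightarrow> 'u"
    and A :: "'x \<Rightarrow> 'x" and B :: "'u \<Rightarrow> 'x" and g :: "'x \<Rightarrow> real"
    and r :: nat and X :: "nat \<Rightarrow> 'x set"
  defines "I \<equiv> {1..r}"
  defines "E \<equiv> (\<lambda>i. {u. B u \<in> X i})"
  assumes vsX: "fin_dim_vs sX" and vsU: "fin_dim_vs sU"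
    and linA: "Vector_Spaces.linear sX sX A"
    and linB: "Vector_Spaces.linear sU sX B" and injB: "inj B"
    and g_nonneg: "\<forall>x. g x \<ge> 0" and g_zero: "\<forall>x. g x = 0 \<longleftrightarrow> x = 0"
    and r_gt: "r > 1"
    and decomp: "direct_sum_of sX UNIV I X"
    and invar: "\<forall>i\<in>I. A ` X i \<subseteq> X i"
    and g_sep: "\<forall>x. g x = (\<Sum>i\<in>I. g (proj I X i x))"
    and range_split: "direct_sum_of sX (range B) I (\<lambda>i. range B \<inter> X i)"
  shows
    "(\<forall>T::nat. T > 0 \<longrightarrow>
        (\<forall>x. \<exists>u. fin_opt A B UNIV g T x u) \<longrightarrow>
        (\<forall>i\<in>I. \<forall>x\<in>X i. \<exists>u. fin_opt A B (E i) g T x u) \<longrightarrow>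
        (\<forall>x. Jfin_star A B UNIV g T x = (\<Sum>i\<in>I. Jfin_star A B (E i) g T (proj I X i x)) \<and>
             (\<forall>us :: nat \<Rightarrow> nat \<Rightarrow> 'u.
                (\<forall>i\<in>I. fin_opt A B (E i) g T (proj I X i x) (us i)) \<longrightarrow>
                (\<exists>u. fin_opt A B UNIV g T x u \<and> u = (\<lambda>t. \<Sum>i\<in>I. us i t)))))
     \<and>
     (\<forall>\<alpha>::real. 0 < \<alpha> \<and> \<alpha> < 1 \<longrightarrow>
        (\<forall>x. \<exists>u. inf_opt A B UNIV g \<alpha> x u) \<longrightarrow>
        (\<forall>i\<in>I. \<forall>x\<in>X i. \<exists>u. inf_opt A B (E i) g \<alpha> x u) \<longrightarrow>
        (\<forall>x. Jinf_star A B UNIV g \<alpha> x = (\<Sum>i\<in>I. Jinf_star A B (E i) g \<alpha> (proj I X i x)) \<and>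
             (\<forall>us :: nat \<Rightarrow> nat \<Rightarrow> 'u.
                (\<forall>i\<in>I. inf_opt A B (E i) g \<alpha> (proj I X i x) (us i)) \<longrightarrow>
                (\<exists>u. inf_opt A B UNIV g \<alpha> x u \<and> u = (\<lambda>t. \<Sum>i\<in>I. us i t)))))"
proof -
  have ds: "\<forall>i\<in>I. module.subspace sX (X i) \<and> X i \<subseteq> UNIV"
    and un: "\<And>v. \<exists>!w. (\<forall>i. (i \<in> I \<longrightarrow> w i \<in> X i) \<and> (i \<notin> I \<longrightarrow> w i = 0)) \<and> v = sum w I"
    using decomp unfolding direct_sum_of_def by auto
  have modX: "module sX" using linA unfolding Vector_Spaces.linear_iff module_iff_vector_space by blast
  have addA: "\<And>a b. A (a + b) = A a + A b" using linA unfolding Vector_Spaces.linear_iff by blast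
  have addB: "\<And>a b. B (a + b) = B a + B b" using linB unfolding Vector_Spaces.linear_iff by blast
  have rs: "proj I X i (B u) \<in> range B" if i: "i \<in> I" for i u
  proof -
    obtain w where w: "(\<forall>i. (i \<in> I \<longrightarrow> w i \<in> range B \<inter> X i) \<and> (i \<notin> I \<longrightarrow> w i = 0)) \<and> B u = sum w I"
      using range_split unfolding direct_sum_of_def by blast
    have "(THE w. (\<forall>j. (j \<in> I \<longrightarrow> w j \<in> X j) \<and> (j \<notin> I \<longrightarrow> w j = 0)) \<and> B u = sum w I) = w"
      by (rule the_equality) (use w un[of "B u"] in blast)+
    then show ?thesis unfolding proj_def using w i by auto
  qed
  interpret dsetup A B g I X
  proof
    show "finite I" unfolding I_def by simp
  next
    fix i a b assume "i \<in> I"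
    then show "0 \<in> X i" using ds by (simp add: module.subspace_def[OF modX])
    assume "a \<in> X i" "b \<in> X i"
    then show "a + b \<in> X i" using ds \<open>i \<in> I\<close> by (simp add: module.subspace_def[OF modX])
  next
    show "\<And>v. \<exists>!w. (\<forall>i. (i \<in> I \<longrightarrow> w i \<in> X i) \<and> (i \<notin> I \<longrightarrow> w i = 0)) \<and> v = sum w I" by (rule un)
  next
    show "\<And>a b. A (a + b) = A a + A b" by (rule addA)
  next
    show "\<And>a b. B (a + b) = B a + B b" by (rule addB)
  next
    show "inj B" by (rule injB)
  next
    show "\<And>i a. i \<in> I \<Longrightarrow> a \<in> X i \<Longrightarrow> A a \<in> X i" using invar by blast
  next
    show "\<And>i u. i \<in> I \<Longrightarrow> proj I X i (B u) \<in> range B" by (rule rs)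
  next
    show "\<And>x. g x = (\<Sum>i\<in>I. g (proj I X i x))" using g_sep by (rule spec)
  next
    show "\<And>x. g x \<ge> 0" using g_nonneg by (rule spec)
  qed
  have Eeq: "E i = {u. B u \<in> X i}" for i unfolding E_def by simp
  have projP: "proj I X i x = P i x" for i x unfolding P_def by simp
  show ?thesis
  proof (intro conjI allI impI)
    fix T :: nat and x
    assume ex: "\<forall>i\<in>I. \<forall>x\<in>X i. \<exists>u. fin_opt A B (E i) g T x u"
    then have "\<forall>i\<in>I. \<exists>u. fin_opt A B (E i) g T (P i x) u" using PX by blast
    then obtain us where "\<forall>i\<in>I. fin_opt A B (E i) g T (P i x) (us i)" by metis
    then show "Jfin_star A B UNIV g T x = (\<Sum>i\<in>I. Jfin_star A B (E i) g T (proj I X i x))"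
      using fin_main[of T x us] by (simp add: Eeq projP)
  next
    fix T :: nat and x and us :: "nat \<Rightarrow> nat \<Rightarrow> 'u"
    assume "\<forall>i\<in>I. fin_opt A B (E i) g T (proj I X i x) (us i)"
    then show "\<exists>u. fin_opt A B UNIV g T x u \<and> u = (\<lambda>t. \<Sum>i\<in>I. us i t)"
      using fin_main[of T x us] by (simp add: Eeq projP)
  next
    fix \<alpha> :: real and x
    assume a: "0 < \<alpha> \<and> \<alpha> < 1"
    assume ex: "\<forall>i\<in>I. \<forall>x\<in>X i. \<exists>u. inf_opt A B (E i) g \<alpha> x u"
    then have "\<forall>i\<in>I. \<exists>u. inf_opt A B (E i) g \<alpha> (P i x) u" using PX by blast
    then obtain us where "\<forall>i\<in>I. inf_opt A B (E i) g \<alpha> (P i x) (us i)" by metis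
    then show "Jinf_star A B UNIV g \<alpha> x = (\<Sum>i\<in>I. Jinf_star A B (E i) g \<alpha> (proj I X i x))"
      using inf_main[of \<alpha> x us] a by (simp add: Eeq projP)
  next
    fix \<alpha> :: real and x and us :: "nat \<Rightarrow> nat \<Rightarrow> 'u"
    assume a: "0 < \<alpha> \<and> \<alpha> < 1"
    assume "\<forall>i\<in>I. inf_opt A B (E i) g \<alpha> (proj I X i x) (us i)"
    then show "\<exists>u. inf_opt A B UNIV g \<alpha> x u \<and> u = (\<lambda>t. \<Sum>i\<in>I. us i t)"
      using inf_main[of \<alpha> x us] a by (simp add: Eeq projP)
  qed
qed

end
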